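(* Let $\overline{H}_n = \sum_{j=1}^n \frac{(-1)^{j-1}}{j}$, let $\{x\} = x - \lfloor x \rfloor$ denote the fractional part, let $\operatorname{Ein}(z) = \int_0^z \frac{1 - e^{-t}}{t}\,dt$, let $\gamma$ be the Euler–Mascheroni constant and let $\delta = \int_0^\infty \frac{e^{-x}}{1+x}\,dx$ be the Euler–Gompertz constant. Then $$\sum_{n = 1}^\infty \frac{\overline{H}_n \{n!\, e \}}{n!} = e \left[\operatorname{Ein}(2) - \gamma\right] - \cosh(1) - \delta + 1.$$ *)

theory Defs
  imports "HOL-Analysis.Analysis"
begin

definition alt_harm :: "nat \<Rightarrow> real" where
  "alt_harm n = (\<Sum>j=1..n. (-1) ^ (j - 1) / real j)"

definition Ein :: "real \<Rightarrow> real" where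
  "Ein z = integral {0..z} (\<lambda>t. (1 - exp (-t)) / t)"

definition euler_gompertz :: real where
  "euler_gompertz = integral {0..} (\<lambda>x. exp (-x) / (1 + x))"

end

theory Submission
  imports Defs
begin


definition rr :: "nat \<Rightarrow> real" where "rr n = exp 1 - (\<Sum>i\<le>n. 1 / fact i)"

lemma exp1_sums: "(\<lambda>n. 1 / fact n) sums (exp 1 :: real)"
  using exp_converges[of "1::real"] by (simp add: divide_inverse)

lemma rr_sums: "(\<lambda>j. 1 / fact (j + Suc n)) sums rr n"
proof -
  have "(\<lambda>j. 1 / fact (j + Suc n)) sums rr n \<longleftrightarrow> (\<lambda>j. 1 / fact j :: real) sums (rr n + (\<Sum>i<Suc n. 1 / fact i))"
    by (rule sums_iff_shift)
  moreover have "rr n + (\<Sum>i<Suc n. 1 / fact i) = exp 1"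
    by (simp add: rr_def lessThan_Suc_atMost)
  ultimately show ?thesis using exp1_sums by simp
qed

lemma rr_pos: "0 < rr n"
proof -
  have "0 < suminf (\<lambda>j. 1 / fact (j + Suc n) :: real)"
    using rr_sums by (intro suminf_pos) (auto simp: sums_iff)
  then show ?thesis using rr_sums sums_unique by metis
qed

lemma fact_pow_le: "fact (Suc n) * real (n+2) ^ j \<le> fact (j + Suc n)"
proof (induction j)
  case 0 then show ?case by simp
next
  case (Suc j)
  have "fact (Suc j + Suc n) = real (Suc j + Suc n) * fact (j + Suc n)"
    by (simp add: fact_Suc)
  moreover have "real (n+2) \<le> real (Suc j + Suc n)" by simp
  moreover have "real (n+2) * (fact (Suc n) * real (n + 2) ^ j) \<le> real (Suc j + Suc n) * fact (j + Suc n)"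
    using Suc \<open>real (n+2) \<le> real (Suc j + Suc n)\<close> by (intro mult_mono) auto
  ultimately have "real (n+2) * (fact (Suc n) * real (n + 2) ^ j) \<le> fact (Suc j + Suc n)"
    by simp
  then show ?case by (simp add: mult_ac)
qed

lemma rr_less: assumes "n \<ge> 1" shows "rr n < 1 / fact n"
proof -
  define c where "c = 1 / real (n+2)"
  have c: "0 \<le> c" "c < 1" using assms by (auto simp: c_def)
  have g: "(\<lambda>j. (1 / fact (Suc n)) * c ^ j) sums ((1 / fact (Suc n)) * (1 / (1 - c)))"
    using c by (intro sums_mult geometric_sums) simp
  have le: "1 / fact (j + Suc n) \<le> (1 / fact (Suc n)) * c ^ j" for j
  proof -
    have "(1 / fact (Suc n)) * c ^ j = 1 / (fact (Suc n) * real (n+2) ^ j)"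
      by (simp add: c_def power_divide)
    also have "\<dots> \<ge> 1 / fact (j + Suc n)"
      using fact_pow_le[of n j] by (intro divide_left_mono) (auto intro!: mult_pos_pos)
    finally show ?thesis .
  qed
  have "rr n \<le> (1 / fact (Suc n)) * (1 / (1 - c))"
    using sums_le[OF le rr_sums g] .
  also have "\<dots> = (real n + 2) / ((real n + 1) ^ 2 * fact n)"
    by (simp add: c_def field_simps power2_eq_square fact_Suc)
  also have "\<dots> < 1 / fact n"
  proof -
    have "1 \<le> real n" using assms by simp
    then have "1 \<le> real n * real n" using mult_mono[of 1 "real n" 1 "real n"] by simp
    then have "real n + 2 < (real n + 1) ^ 2" using \<open>1 \<le> real n\<close> by (simp add: power2_eq_square algebra_simps)
    then have "(real n + 2) / (real n + 1) ^ 2 < 1" by simp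
    then have "((real n + 2) / (real n + 1) ^ 2) * (1 / fact n) < 1 * (1 / fact n)"
      by (intro mult_strict_right_mono) auto
    then show ?thesis by simp
  qed
  finally show ?thesis .
qed

lemma frac_fact_e: assumes "n \<ge> 1" shows "frac (fact n * exp 1) = fact n * rr n"
proof -
  have "fact n * exp 1 = (\<Sum>i\<le>n. fact n / fact i) + fact n * rr n"
    by (simp add: rr_def sum_distrib_left algebra_simps)
  moreover have "(\<Sum>i\<le>n. fact n / fact i :: real) \<in> \<int>"
  proof (intro Ints_sum)
    fix i assume "i \<in> {..n}"
    then have "fact i dvd (fact n :: nat)" by (intro fact_dvd) simp
    then have "real (fact n div fact i) = real (fact n) / real (fact i)" by (rule real_of_nat_div)
    then have e: "(fact n / fact i :: real) = real (fact n div fact i :: nat)" by (simp add: of_nat_fact)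
    show "(fact n / fact i :: real) \<in> \<int>" by (subst e) (rule Ints_of_nat)
  qed
  moreover have "0 \<le> fact n * rr n" "fact n * rr n < 1"
    using rr_pos[of n] rr_less[OF assms] by (auto simp: field_simps)
  ultimately show ?thesis by (simp add: frac_add_int_left frac_eq)
qed



lemma alt_harm_Suc: "alt_harm (Suc n) = alt_harm n + (-1) ^ n / real (Suc n)"
  by (simp add: alt_harm_def)

lemma alt_harm_0: "alt_harm 0 = 0" by (simp add: alt_harm_def)

lemma rr_Suc: "rr (Suc n) = rr n - 1 / fact (Suc n)"
  by (simp add: rr_def)

definition AA :: "nat \<Rightarrow> real" where
  "AA N = real (N+1) * alt_harm N - (if odd N then 1 else 0)"

definition cc :: "nat \<Rightarrow> real" where
  "cc n = alt_harm (n+1) / fact (n+1) - (if odd (n+1) then 1 / fact (n+2) else 0)"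

lemma alg_even: "d > 0 \<Longrightarrow> F > 0 \<Longrightarrow>
  (d*h - 1)*(r + 1/(d*F)) + (h - 1/d)*r = (h/F - 1/(d*F)) + ((d+1)*(h - 1/d))*(r::real)"
  by (simp add: field_simps)

lemma alg_odd: "d > 0 \<Longrightarrow> F > 0 \<Longrightarrow>
  (d*h)*(r + 1/(d*F)) + (h + 1/d)*r = h/F + ((d+1)*(h + 1/d) - 1)*(r::real)"
  by (simp add: field_simps)

lemma abel_step:
  "AA (Suc N) * rr (Suc N) + alt_harm (Suc (Suc N)) * rr (Suc (Suc N))
     = cc N + AA (Suc (Suc N)) * rr (Suc (Suc N))"
proof -
  define h where "h = alt_harm (Suc N)"
  define r where "r = rr (Suc (Suc N))"
  define F where "F = (fact (Suc N) :: real)"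
  define d where "d = real N + 2"
  have F: "F > 0" by (simp add: F_def)
  have d: "d > 0" by (simp add: d_def)
  have r1: "rr (Suc N) = r + 1 / (d * F)"
    by (simp add: r_def rr_Suc F_def d_def fact_Suc algebra_simps)
  have f2: "(fact (N+2) :: real) = d * F"
    by (simp add: F_def d_def fact_Suc algebra_simps)
  show ?thesis
  proof (cases "even N")
    case True
    have h2: "alt_harm (Suc (Suc N)) = h - 1/d"
      using True by (simp add: h_def alt_harm_Suc d_def add_ac)
    have e: "AA (Suc N) = d * h - 1" "AA (Suc (Suc N)) = (d+1) * (h - 1/d)"
      "cc N = h / F - 1 / (d*F)"
      using True by (auto simp: AA_def cc_def h2 h_def F_def d_def f2[unfolded F_def d_def] algebra_simps)
    show ?thesis unfolding e r1 h2 r_def[symmetric] by (rule alg_even[OF d F])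
  next
    case False
    have h2: "alt_harm (Suc (Suc N)) = h + 1/d"
      using False by (simp add: h_def alt_harm_Suc d_def add_ac)
    have e: "AA (Suc N) = d * h" "AA (Suc (Suc N)) = (d+1) * (h + 1/d) - 1"
      "cc N = h / F"
      using False by (auto simp: AA_def cc_def h2 h_def F_def d_def algebra_simps)
    show ?thesis unfolding e r1 h2 r_def[symmetric] by (rule alg_odd[OF d F])
  qed
qed

lemma abel:
  "(\<Sum>n<Suc N. alt_harm (Suc n) * rr (Suc n)) = (\<Sum>n<N. cc n) + AA (Suc N) * rr (Suc N)"
proof (induction N)
  case 0 then show ?case by (simp add: AA_def alt_harm_def)
next
  case (Suc N)
  have "(\<Sum>n<Suc (Suc N). alt_harm (Suc n) * rr (Suc n))
     = (\<Sum>n<N. cc n) + (AA (Suc N) * rr (Suc N) + alt_harm (Suc (Suc N)) * rr (Suc (Suc N)))"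
    using Suc by simp
  also have "\<dots> = (\<Sum>n<Suc N. cc n) + AA (Suc (Suc N)) * rr (Suc (Suc N))"
    by (simp add: abel_step)
  finally show ?case .
qed

lemma inv_fact_lim: "(\<lambda>n. 1 / fact n :: real) \<longlonglongrightarrow> 0"
  using exp1_sums summable_LIMSEQ_zero sums_summable by blast

lemma odd_sums: "(\<lambda>n. if odd (n+1) then 1 / fact (n+2) else 0 :: real) sums (cosh 1 - 1)"
proof -
  define f where "f = (\<lambda>n. if even n then 1 / fact n else 0 :: real)"
  have "(\<lambda>n. if even n then (1::real) ^ n /\<^sub>R fact n else 0) = f"
    by (auto simp: f_def fun_eq_iff divide_inverse)
  then have "f sums cosh 1" using cosh_converges[of "1::real"] by simp
  then have "(\<lambda>n. f (Suc n)) sums (cosh 1 - f 0)"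
    using sums_Suc_iff[of f "cosh 1 - f 0"] by simp
  then have "(\<lambda>n. f (Suc (Suc n))) sums (cosh 1 - f 0 - f 1)"
    using sums_Suc_iff[of "\<lambda>n. f (Suc n)" "cosh 1 - f 0 - f 1"] by simp
  moreover have "f 0 = 1" "f 1 = 0" by (auto simp: f_def)
  moreover have "(\<lambda>n. f (Suc (Suc n))) = (\<lambda>n. if odd (n+1) then 1 / fact (n+2) else 0)"
    by (auto simp: f_def fun_eq_iff add_2_eq_Suc')
  ultimately show ?thesis by simp
qed

lemma partB:
  assumes L: "(\<lambda>n. alt_harm n / fact n) sums L"
    and hb: "\<And>n. \<bar>alt_harm n\<bar> \<le> 2"
  shows "(\<lambda>n. alt_harm (Suc n) * frac (fact (Suc n) * exp 1) / fact (Suc n)) sums (L - cosh 1 + 1)"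
proof -
  have eq: "(\<lambda>n. alt_harm (Suc n) * frac (fact (Suc n) * exp 1) / fact (Suc n))
      = (\<lambda>n. alt_harm (Suc n) * rr (Suc n))"
    by (rule ext) (simp add: frac_fact_e del: fact_Suc)
  have L1: "(\<lambda>n. alt_harm (n+1) / fact (n+1)) sums L"
    using sums_Suc_iff[of "\<lambda>n. alt_harm n / fact n" L] L by (simp add: alt_harm_0 del: fact_Suc)
  have ccs: "cc sums (L - (cosh 1 - 1))"
    unfolding cc_def by (intro sums_diff L1 odd_sums)
  have z: "(\<lambda>N. AA (Suc N) * rr (Suc N)) \<longlonglongrightarrow> 0"
  proof (rule Lim_null_comparison)
    have lim: "(\<lambda>N. 2 * (1 / fact N) + 3 * (1 / fact (Suc N)) :: real) \<longlonglongrightarrow> 2 * 0 + 3 * 0"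
      by (intro tendsto_intros inv_fact_lim LIMSEQ_Suc[OF inv_fact_lim])
    then show "(\<lambda>N. 2 * (1 / fact N) + 3 * (1 / fact (Suc N)) :: real) \<longlonglongrightarrow> 0" by simp
    show "\<forall>\<^sub>F N in sequentially. norm (AA (Suc N) * rr (Suc N)) \<le> 2 * (1 / fact N) + 3 * (1 / fact (Suc N))"
    proof (intro always_eventually allI)
      fix N :: nat
      have a: "\<bar>AA (Suc N)\<bar> \<le> 2 * real N + 5"
      proof -
        have "\<bar>AA (Suc N)\<bar> \<le> \<bar>real (N+2) * alt_harm (Suc N)\<bar> + \<bar>(if odd (Suc N) then 1 else 0)\<bar>"
          using abs_triangle_ineq4[of "real (N+2) * alt_harm (Suc N)" "if odd (Suc N) then 1 else 0"]
          by (simp add: AA_def)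
        also have "\<dots> \<le> real (N+2) * \<bar>alt_harm (Suc N)\<bar> + 1"
          by (auto simp: abs_mult)
        also have "\<dots> \<le> real (N+2) * 2 + 1" using hb[of "Suc N"] by (intro add_mono mult_left_mono) auto
        finally show ?thesis by simp
      qed
      have r: "\<bar>rr (Suc N)\<bar> \<le> 1 / fact (Suc N)"
        using rr_pos[of "Suc N"] rr_less[of "Suc N"] by simp
      have "norm (AA (Suc N) * rr (Suc N)) \<le> (2 * real N + 5) * (1 / fact (Suc N))"
        unfolding real_norm_def abs_mult using a r by (intro mult_mono) auto
      also have "\<dots> = 2 * (1 / fact N) + 3 * (1 / fact (Suc N))"
      proof -
        have g: "(2 * x + 5) * (1 / ((1 + x) * G)) = 2 * (1 / G) + 3 * (1 / ((1 + x) * G))"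
          if a: "G > 0" "x \<ge> 0" for G x :: real
        proof -
          define y where "y = (1 + x) * G"
          have "1 / G = (1 + x) / y" using a by (simp add: y_def)
          then have "2 * (1 / G) + 3 * (1 / y) = (2 * x + 5) / y" 
            by (simp add: add_divide_distrib[symmetric] algebra_simps)
          then show ?thesis by (simp add: y_def)
        qed
        have "(fact (Suc N) :: real) = (1 + real N) * fact N" by (simp add: fact_Suc)
        then show ?thesis using g[of "fact N" "real N"] by simp
      qed
      finally show "norm (AA (Suc N) * rr (Suc N)) \<le> 2 * (1 / fact N) + 3 * (1 / fact (Suc N))" .
    qed
  qed
  have "(\<lambda>N. (\<Sum>n<N. cc n) + AA (Suc N) * rr (Suc N)) \<longlonglongrightarrow> (L - (cosh 1 - 1)) + 0"
    using ccs z by (intro tendsto_add) (auto simp: sums_def)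
  moreover have "(\<lambda>N. \<Sum>n<Suc N. alt_harm (Suc n) * rr (Suc n)) = (\<lambda>N. (\<Sum>n<N. cc n) + AA (Suc N) * rr (Suc N))"
    by (intro ext abel)
  moreover have "L - (cosh 1 - 1) + 0 = L - cosh 1 + 1" by simp
  ultimately have "(\<lambda>N. \<Sum>n<Suc N. alt_harm (Suc n) * rr (Suc n)) \<longlonglongrightarrow> L - cosh 1 + 1"
    by metis
  then have "(\<lambda>n. alt_harm (Suc n) * rr (Suc n)) sums (L - cosh 1 + 1)"
    unfolding sums_def by (rule LIMSEQ_imp_Suc)
  then show ?thesis by (subst eq)
qed



lemma alt_harm_alt: "alt_harm m = (\<Sum>j<m. (-1) ^ j / real (j+1))"
  by (induction m) (simp_all add: alt_harm_0 alt_harm_Suc)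

lemma term_deriv: "((\<lambda>t. (1 - t) ^ (j+1) / real (j+1)) has_real_derivative (- ((1 - t) ^ j))) (at t)"
proof -
  have "((\<lambda>t. 1 - t) has_real_derivative -1) (at t)"
    using DERIV_diff[OF DERIV_const DERIV_ident] by simp
  from DERIV_cdivide[OF DERIV_power[OF this, of "j+1"], of "real (j+1)"]
  show ?thesis by (simp del: of_nat_Suc)
qed

lemma hb_integral_poly: "((\<lambda>t. \<Sum>j<m. (1 - t) ^ j) has_integral alt_harm m) {1..2::real}"
proof -
  define G where "G = (\<lambda>t::real. - (\<Sum>j<m. (1 - t) ^ (j+1) / real (j+1)))"
  have d: "(G has_real_derivative (\<Sum>j<m. (1 - t) ^ j)) (at t)" for t
  proof -
    have "((\<lambda>t. \<Sum>j<m. (1 - t) ^ (j+1) / real (j+1)) has_real_derivative (\<Sum>j<m. - ((1 - t) ^ j))) (at t)"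
      by (intro DERIV_sum term_deriv)
    then show ?thesis unfolding G_def using DERIV_minus by (fastforce simp: sum_negf)
  qed
  have "((\<lambda>t. \<Sum>j<m. (1 - t) ^ j) has_integral (G 2 - G 1)) {1..2::real}"
    by (intro fundamental_theorem_of_calculus)
       (auto simp flip: has_real_derivative_iff_has_vector_derivative intro: has_field_derivative_at_within d)
  moreover have "G 2 - G 1 = alt_harm m"
    by (simp add: G_def alt_harm_alt power_minus' sum_negf[symmetric] power_Suc)
  ultimately show ?thesis by simp
qed

lemma hb_integral: "((\<lambda>t. (1 - (1 - t) ^ m) / t) has_integral alt_harm m) {1..2::real}"
proof (rule has_integral_eq[OF _ hb_integral_poly])
  fix t :: real assume "t \<in> {1..2}"
  then have "t \<noteq> 0" by auto
  have "1 - (1 - t) ^ m = (1 - (1 - t)) * (\<Sum>j<m. (1 - t) ^ j)" by (rule one_diff_power_eq)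
  then show "(\<Sum>j<m. (1 - t) ^ j) = (1 - (1 - t) ^ m) / t" using \<open>t \<noteq> 0\<close> by simp
qed

lemma hb_pt_bound: assumes "t \<in> {1..2::real}" shows "\<bar>(1 - (1 - t) ^ m) / t\<bar> \<le> 2"
proof -
  have t: "t \<ge> 1" "\<bar>1 - t\<bar> \<le> 1" using assms by auto
  have "\<bar>(1 - t) ^ m\<bar> \<le> 1" using t by (simp add: power_abs power_le_one)
  then have "\<bar>1 - (1 - t) ^ m\<bar> \<le> 2" by linarith
  moreover have "\<bar>(1 - (1 - t) ^ m) / t\<bar> = \<bar>1 - (1 - t) ^ m\<bar> / t"
    using t by (simp add: abs_divide)
  moreover have "\<bar>1 - (1 - t) ^ m\<bar> / t \<le> \<bar>1 - (1 - t) ^ m\<bar> / 1"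
    using t by (intro divide_left_mono) auto
  then have "\<bar>1 - (1 - t) ^ m\<bar> / t \<le> \<bar>1 - (1 - t) ^ m\<bar>" by simp
  ultimately show ?thesis by linarith
qed

lemma hb_bound: "\<bar>alt_harm m\<bar> \<le> 2"
proof -
  have "norm (alt_harm m) \<le> 2 * 1"
    using has_integral_bound[of 2 "\<lambda>t. (1 - (1 - t) ^ m) / t" "alt_harm m" "1::real" 2] hb_integral hb_pt_bound
    by simp
  then show ?thesis by simp
qed



definition psi :: "real \<Rightarrow> real" where "psi t = (1 - exp (-t)) / t"

lemma psi_int12: "psi integrable_on {1..2}"
  unfolding psi_def by (intro integrable_continuous_interval continuous_intros) auto

lemma L_sums: "(\<lambda>m. alt_harm m / fact m) sums (exp 1 * integral {1..2} psi)"
proof -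
  define f where "f N t = (\<Sum>m<N. ((1 - (1 - t) ^ m) / t) / fact m)" for N and t :: real
  define g where "g t = exp 1 * psi t" for t
  have fint: "(f N has_integral (\<Sum>m<N. alt_harm m / fact m)) {1..2}" for N
    unfolding f_def by (intro has_integral_sum has_integral_divide hb_integral) simp
  have sumle: "(\<Sum>m<N. 1 / fact m) \<le> (exp 1 :: real)" for N
    using sum_le_suminf[of "\<lambda>m. 1 / fact m :: real" "{..<N}"] exp1_sums
    by (simp add: sums_iff)
  have bound: "norm (f N t) \<le> 2 * exp 1" if t: "t \<in> {1..2}" for N t
  proof -
    have "norm (f N t) \<le> (\<Sum>m<N. \<bar>((1 - (1 - t) ^ m) / t) / fact m\<bar>)"
      unfolding f_def real_norm_def by (rule sum_abs)
    also have "\<dots> \<le> (\<Sum>m<N. 2 * (1 / fact m))"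
    proof (intro sum_mono)
      fix m
      have "\<bar>((1 - (1 - t) ^ m) / t) / fact m\<bar> = \<bar>(1 - (1 - t) ^ m) / t\<bar> * (1 / fact m)"
        by (simp add: abs_divide abs_mult)
      also have "\<dots> \<le> 2 * (1 / fact m)"
        using hb_pt_bound[OF t, of m] by (intro mult_right_mono) auto
      finally show "\<bar>((1 - (1 - t) ^ m) / t) / fact m\<bar> \<le> 2 * (1 / fact m)" .
    qed
    also have "\<dots> = 2 * (\<Sum>m<N. 1 / fact m)" by (simp add: sum_distrib_left)
    also have "\<dots> \<le> 2 * exp 1" using sumle[of N] by simp
    finally show ?thesis .
  qed
  have conv: "(\<lambda>N. f N t) \<longlonglongrightarrow> g t" if t: "t \<in> {1..2}" for t
  proof -
    have t0: "t \<noteq> 0" using t by auto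
    have s2: "(\<lambda>m. (1 - t) ^ m / fact m) sums exp (1 - t)"
      using exp_converges[of "1 - t"] by (simp add: divide_inverse mult.commute)
    have "(\<lambda>m. (1 / fact m - (1 - t) ^ m / fact m) / t) sums ((exp 1 - exp (1 - t)) / t)"
      by (intro sums_divide sums_diff exp1_sums s2)
    moreover have "(\<lambda>m. (1 / fact m - (1 - t) ^ m / fact m) / t) = (\<lambda>m. ((1 - (1 - t) ^ m) / t) / fact m)"
      by (rule ext) (simp add: field_simps)
    moreover have "(exp 1 - exp (1 - t)) / t = g t"
      using exp_add[of 1 "-t"] by (simp add: g_def psi_def field_simps)
    ultimately have "(\<lambda>m. ((1 - (1 - t) ^ m) / t) / fact m) sums g t" by simp
    then show ?thesis unfolding sums_def f_def .
  qed
  have h: "(\<lambda>t::real. 2 * exp 1) integrable_on {1..2}"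
    by (intro integrable_continuous_interval continuous_intros)
  have "(\<lambda>N. integral {1..2} (f N)) \<longlonglongrightarrow> integral {1..2} g"
    by (rule dominated_convergence(2)[OF _ h bound conv]) (use fint in blast)+
  moreover have "integral {1..2} (f N) = (\<Sum>m<N. alt_harm m / fact m)" for N
    using fint by (rule integral_unique)
  moreover have "integral {1..2} g = exp 1 * integral {1..2} psi"
    unfolding g_def by simp
  ultimately show ?thesis unfolding sums_def by simp
qed



definition phi :: "nat \<Rightarrow> real \<Rightarrow> real" where
  "phi n t = (\<Sum>j<n. (1 - t / real n) ^ j) / real n"
definition GG :: "nat \<Rightarrow> real \<Rightarrow> real" where
  "GG n t = - (\<Sum>j<n. (1 - t / real n) ^ (j+1) / real (j+1))"
definition psin :: "nat \<Rightarrow> real \<Rightarrow> real" where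
  "psin n t = (1 - (1 - t / real n) ^ n) / t"

lemma GG_deriv: "(GG n has_real_derivative phi n t) (at t)"
proof -
  have lin: "((\<lambda>t. 1 - t / real n) has_real_derivative (0 - 1 / real n)) (at t)"
    by (intro DERIV_diff DERIV_const DERIV_cdivide DERIV_ident)
  have tm: "((\<lambda>t. (1 - t / real n) ^ (j+1) / real (j+1)) has_real_derivative
      (- ((1 - t / real n) ^ j / real n))) (at t)" for j
    using DERIV_cdivide[OF DERIV_power[OF lin, of "j+1"], of "real (j+1)"]
    by (simp del: of_nat_Suc)
  have "((\<lambda>t. \<Sum>j<n. (1 - t / real n) ^ (j+1) / real (j+1)) has_real_derivative
      (\<Sum>j<n. - ((1 - t / real n) ^ j / real n))) (at t)"
    by (intro DERIV_sum tm)
  from DERIV_minus[OF this] show ?thesis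
    unfolding GG_def phi_def by (simp add: sum_negf sum_divide_distrib)
qed

lemma phi_eq: assumes "n \<ge> 1" "t \<noteq> 0" shows "phi n t = psin n t"
proof -
  have "1 - (1 - t / real n) ^ n = (1 - (1 - t / real n)) * (\<Sum>j<n. (1 - t / real n) ^ j)"
    by (rule one_diff_power_eq)
  then show ?thesis using assms by (simp add: phi_def psin_def field_simps)
qed

lemma harm_alt: "harm n = (\<Sum>j<n. 1 / real (j+1))"
  by (induction n) (simp_all add: harm_Suc harm_def divide_inverse)

lemma GG_n: "n \<ge> 1 \<Longrightarrow> GG n (real n) = 0"
  by (simp add: GG_def)

lemma GG_0: "GG n 0 = - harm n"
  by (simp add: GG_def harm_alt)

lemma A_int: assumes "n \<ge> 1" shows "(psin n has_integral (GG n 1 - GG n 0)) {0..1}"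
proof -
  have "(phi n has_integral (GG n 1 - GG n 0)) {0..1}"
    by (intro fundamental_theorem_of_calculus)
       (auto simp flip: has_real_derivative_iff_has_vector_derivative intro: has_field_derivative_at_within GG_deriv)
  then show ?thesis
    using has_integral_spike_finite[of "{0}" "{0..1}" "psin n" "phi n"] phi_eq[OF assms] by auto
qed

lemma B_int: assumes "n \<ge> 1"
  shows "((\<lambda>x. (1 - (1 + x) / real n) ^ n / (1 + x)) has_integral
           (ln (real n) - (GG n (real n) - GG n 1))) {0..real n - 1}"
proof -
  have n: "0 \<le> real n - 1" using assms by simp
  have d1: "((\<lambda>x. GG n (1 + x)) has_real_derivative phi n (1 + x)) (at x)" for x
    using DERIV_chain2[OF GG_deriv[of n "1+x"] DERIV_add[OF DERIV_const[of 1] DERIV_ident]] by simp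
  have d2: "((\<lambda>x. ln (1 + x)) has_real_derivative 1 / (1 + x)) (at x)" if "x > -1" for x
    using DERIV_chain2[OF DERIV_ln[of "1+x"] DERIV_add[OF DERIV_const[of 1] DERIV_ident]] that
    by (simp add: divide_inverse)
  have i1: "((\<lambda>x. phi n (1 + x)) has_integral (GG n (1 + (real n - 1)) - GG n (1 + 0))) {0..real n - 1}"
    using n by (intro fundamental_theorem_of_calculus)
       (auto simp flip: has_real_derivative_iff_has_vector_derivative intro: has_field_derivative_at_within d1)
  have i2: "((\<lambda>x. 1 / (1 + x)) has_integral (ln (1 + (real n - 1)) - ln (1 + 0))) {0..real n - 1}"
    using n by (intro fundamental_theorem_of_calculus)
       (auto simp flip: has_real_derivative_iff_has_vector_derivative intro!: has_field_derivative_at_within d2)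
  have "((\<lambda>x. 1 / (1 + x) - phi n (1 + x)) has_integral (ln (real n) - (GG n (real n) - GG n 1))) {0..real n - 1}"
    using has_integral_diff[OF i2 i1] by simp
  then show ?thesis
  proof (rule has_integral_eq[rotated])
    fix x assume x: "x \<in> {0..real n - 1}"
    then have "1 + x \<noteq> 0" by auto
    then show "1 / (1 + x) - phi n (1 + x) = (1 - (1 + x) / real n) ^ n / (1 + x)"
      using phi_eq[OF assms \<open>1 + x \<noteq> 0\<close>] by (simp add: psin_def field_simps)
  qed
qed



lemma exp_lim_Suc: "(\<lambda>k. (1 - t / real (Suc k)) ^ (Suc k)) \<longlonglongrightarrow> exp (- t)"
proof -
  have "(\<lambda>k. (1 + - t / real (Suc k)) ^ (Suc k)) \<longlonglongrightarrow> exp (- t)"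
    using LIMSEQ_Suc[OF tendsto_exp_limit_sequentially[of "-t"]] .
  moreover have "(\<lambda>k. (1 + - t / real (Suc k)) ^ (Suc k)) = (\<lambda>k. (1 - t / real (Suc k)) ^ (Suc k))"
    by (rule ext) (simp only: diff_conv_add_uminus minus_divide_left)
  ultimately show ?thesis by simp
qed

lemma psin_bound: assumes "n \<ge> 1" "t \<in> {0..1}" shows "norm (psin n t) \<le> 1"
proof (cases "t = 0")
  case True then show ?thesis by (simp add: psin_def)
next
  case False
  then have t: "0 < t" "t \<le> 1" using assms by auto
  have n: "real n \<ge> 1" using assms by simp
  have q0: "0 \<le> 1 - t / real n" "1 - t / real n \<le> 1" using t n by (auto simp: field_simps)
  have "(1 - t / real n) ^ n \<le> 1" using q0 by (rule power_le_one)
  moreover have "1 + real n * (- t / real n) \<le> (1 + - t / real n) ^ n"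
    using t n by (intro Bernoulli_inequality) (auto simp: field_simps)
  then have "1 - t \<le> (1 - t / real n) ^ n" using n by simp
  ultimately have "0 \<le> 1 - (1 - t / real n) ^ n" "1 - (1 - t / real n) ^ n \<le> t" by auto
  then show ?thesis using t by (simp add: psin_def abs_divide divide_le_eq_1)
qed

lemma Ein1_lim: "psi integrable_on {0..1}"
  "(\<lambda>k. GG (Suc k) 1 - GG (Suc k) 0) \<longlonglongrightarrow> Ein 1"
proof -
  have fi: "psin (Suc k) integrable_on {0..1}" for k
    using A_int[of "Suc k"] by auto
  have h: "(\<lambda>t::real. 1::real) integrable_on {0..1}"
    by (intro integrable_continuous_interval continuous_intros)
  have b: "norm (psin (Suc k) t) \<le> 1" if "t \<in> {0..1}" for k t
    using psin_bound[of "Suc k" t] that by simp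
  have c: "(\<lambda>k. psin (Suc k) t) \<longlonglongrightarrow> psi t" if "t \<in> {0..1}" for t
  proof (cases "t = 0")
    case True then show ?thesis by (simp add: psin_def psi_def)
  next
    case False
    have "(\<lambda>k. (1 - (1 - t / real (Suc k)) ^ (Suc k)) / t) \<longlonglongrightarrow> (1 - exp (- t)) / t"
      using False by (intro tendsto_intros exp_lim_Suc)
    then show ?thesis by (simp add: psin_def psi_def)
  qed
  show "psi integrable_on {0..1}"
    by (rule dominated_convergence(1)[OF fi h b c])
  have "(\<lambda>k. integral {0..1} (psin (Suc k))) \<longlonglongrightarrow> integral {0..1} psi"
    by (rule dominated_convergence(2)[OF fi h b c])
  moreover have "integral {0..1} (psin (Suc k)) = GG (Suc k) 1 - GG (Suc k) 0" for k
    using A_int[of "Suc k"] by (simp add: integral_unique)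
  moreover have "integral {0..1} psi = Ein 1"
    by (simp add: Ein_def psi_def[abs_def])
  ultimately show "(\<lambda>k. GG (Suc k) 1 - GG (Suc k) 0) \<longlonglongrightarrow> Ein 1" by simp
qed



definition bf :: "nat \<Rightarrow> real \<Rightarrow> real" where
  "bf k x = (if x \<in> {0..real k} then (1 - (1 + x) / real (Suc k)) ^ (Suc k) / (1 + x) else 0)"

lemma bf_int: "(bf k has_integral (ln (real (Suc k)) - (GG (Suc k) (real (Suc k)) - GG (Suc k) 1))) {0..}"
proof -
  have "((\<lambda>x. (1 - (1 + x) / real (Suc k)) ^ (Suc k) / (1 + x)) has_integral
           (ln (real (Suc k)) - (GG (Suc k) (real (Suc k)) - GG (Suc k) 1))) {0..real k}"
    using B_int[of "Suc k"] by simp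
  then show ?thesis unfolding bf_def
    by (subst has_integral_restrict) auto
qed

lemma bf_bound: assumes "x \<in> {0..}" shows "norm (bf k x) \<le> exp (- 1 * x) * exp (- 1)"
proof (cases "x \<le> real k")
  case False then show ?thesis by (simp add: bf_def)
next
  case True
  define n where "n = Suc k"
  have x: "0 \<le> x" using assms by auto
  have n: "real n > 0" "1 + x \<le> real n" using True by (auto simp: n_def)
  define q where "q = 1 - (1 + x) / real n"
  have q0: "0 \<le> q" using n by (simp add: q_def field_simps)
  have q1: "q \<le> exp (- (1 + x) / real n)"
    using exp_ge_add_one_self[of "- (1 + x) / real n"] unfolding q_def
    by (simp only: diff_conv_add_uminus minus_divide_left)
  have "q ^ n \<le> exp (- (1 + x) / real n) ^ n" using q0 q1 by (simp add: power_mono)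
  also have "\<dots> = exp (real n * (- (1 + x) / real n))" by (rule exp_of_nat_mult[symmetric])
  also have "\<dots> = exp (- 1 * x) * exp (- 1)" using n by (simp add: exp_add[symmetric])
  finally have qn: "q ^ n \<le> exp (- 1 * x) * exp (- 1)" .
  have "norm (bf k x) = q ^ n / (1 + x)" using True x q0 by (simp add: bf_def q_def n_def)
  also have "\<dots> \<le> q ^ n / 1" using x q0 by (intro divide_left_mono) auto
  finally show ?thesis using qn by simp
qed

lemma delta_lim: "(\<lambda>k. ln (real (Suc k)) - (GG (Suc k) (real (Suc k)) - GG (Suc k) 1))
    \<longlonglongrightarrow> exp (- 1) * euler_gompertz"
proof -
  define g where "g x = exp (- 1) * (exp (- x) / (1 + x))" for x :: real
  have fi: "bf k integrable_on {0..}" for k using bf_int by blast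
  have h: "(\<lambda>x. exp (- 1 * x) * exp (- 1)) integrable_on {0::real..}"
  proof -
    have "((\<lambda>x. exp (-1*x)) has_integral exp(-1*0)/1) {0::real..}"
      by (rule has_integral_exp_minus_to_infinity) simp
    from has_integral_mult_left[OF this, of "exp (-1)"] show ?thesis by blast
  qed
  have c: "(\<lambda>k. bf k x) \<longlonglongrightarrow> g x" if "x \<in> {0..}" for x
  proof -
    have x: "x \<ge> 0" using that by auto
    obtain N :: nat where N: "x \<le> real N" using real_arch_simple by blast
    have ev: "eventually (\<lambda>k. (1 - (1 + x) / real (Suc k)) ^ (Suc k) / (1 + x) = bf k x) sequentially"
      using eventually_ge_at_top[of N]
    proof eventually_elim
      case (elim k)
      then have "x \<le> real k" using N by linarith
      then show ?case using x by (simp add: bf_def)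
    qed
    have "(\<lambda>k. (1 - (1 + x) / real (Suc k)) ^ (Suc k) / (1 + x)) \<longlonglongrightarrow> exp (- (1 + x)) / (1 + x)"
      using x by (intro tendsto_intros exp_lim_Suc) auto
    moreover have "exp (- (1 + x)) / (1 + x) = g x"
      by (simp add: g_def exp_add[symmetric])
    ultimately show ?thesis using Lim_transform_eventually[OF _ ev] by simp
  qed
  have "(\<lambda>k. integral {0..} (bf k)) \<longlonglongrightarrow> integral {0..} g"
    by (rule dominated_convergence(2)[OF fi h bf_bound c])
  moreover have "integral {0..} (bf k) = ln (real (Suc k)) - (GG (Suc k) (real (Suc k)) - GG (Suc k) 1)" for k
    using bf_int by (rule integral_unique)
  moreover have "integral {0..} g = exp (- 1) * euler_gompertz"
  proof -
    have "g = (\<lambda>x. exp (- 1) * (exp (- x) / (1 + x)))" by (rule ext) (simp add: g_def)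
    then show ?thesis unfolding euler_gompertz_def
      by (simp only:) (rule Henstock_Kurzweil_Integration.integral_mult_right)
  qed
  ultimately show ?thesis by simp
qed

lemma gamma_rel: "euler_mascheroni = Ein 1 - exp (- 1) * euler_gompertz"
proof -
  have "(\<lambda>k. (GG (Suc k) 1 - GG (Suc k) 0) - (ln (real (Suc k)) - (GG (Suc k) (real (Suc k)) - GG (Suc k) 1)))
        \<longlonglongrightarrow> Ein 1 - exp (- 1) * euler_gompertz"
    by (intro tendsto_diff Ein1_lim(2) delta_lim)
  moreover have "(\<lambda>k. (GG (Suc k) 1 - GG (Suc k) 0) - (ln (real (Suc k)) - (GG (Suc k) (real (Suc k)) - GG (Suc k) 1)))
      = (\<lambda>k. harm (Suc k) - ln (real (Suc k)))"
  proof (rule ext)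
    fix k
    have "GG (Suc k) (real (Suc k)) = 0" by (rule GG_n) simp
    then show "(GG (Suc k) 1 - GG (Suc k) 0) - (ln (real (Suc k)) - (GG (Suc k) (real (Suc k)) - GG (Suc k) 1))
      = harm (Suc k) - ln (real (Suc k))" by (simp add: GG_0)
  qed
  ultimately have "(\<lambda>k. harm (Suc k) - ln (real (Suc k)) :: real) \<longlonglongrightarrow> Ein 1 - exp (- 1) * euler_gompertz"
    by metis
  moreover have "(\<lambda>k. harm (Suc k) - ln (real (Suc k)) :: real) \<longlonglongrightarrow> euler_mascheroni"
    using LIMSEQ_Suc[OF euler_mascheroni_LIMSEQ] by simp
  ultimately show ?thesis using LIMSEQ_unique by blast
qed

lemma Ein_diff: "Ein 2 - Ein 1 = integral {1..2} psi"
proof -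
  have "(psi has_integral (integral {0..1} psi + integral {1..2} psi)) {0..2}"
    by (intro has_integral_combine[of 0 1 2] integrable_integral Ein1_lim(1) psi_int12) auto
  then have "Ein 2 = integral {0..1} psi + integral {1..2} psi"
    unfolding Ein_def psi_def[abs_def, symmetric] by (rule integral_unique)
  moreover have "Ein 1 = integral {0..1} psi" by (simp add: Ein_def psi_def[abs_def])
  ultimately show ?thesis by simp
qed

theorem mainTheorem9:
  shows "(\<lambda>n. alt_harm (Suc n) * frac (fact (Suc n) * exp 1) / fact (Suc n)) sums
           (exp 1 * (Ein 2 - euler_mascheroni) - cosh 1 - euler_gompertz + 1)"
proof -
  have L: "(\<lambda>m. alt_harm m / fact m) sums (exp 1 * (Ein 2 - Ein 1))"
    using L_sums by (simp add: Ein_diff)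
  have "exp 1 * (Ein 2 - Ein 1) - cosh 1 + 1 = exp 1 * (Ein 2 - euler_mascheroni) - cosh 1 - euler_gompertz + 1"
    by (simp add: gamma_rel algebra_simps exp_minus field_simps)
  with partB[OF L hb_bound] show ?thesis by simp
qed

end
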